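(* The space $\mathcal P_\infty$ of proper poset limits is a contractible topological space; in particular it is connected and simply connected.
   Context: A poset is a nonempty set with a strict partial order $<$. For finite posets $Q,P$, $t(Q,P)$ is the proportion of all maps $\varphi$ from the ground set of $Q$ to that of $P$ with $x<_Qy\Rightarrow\varphi(x)<_P\varphi(y)$. Let $\mathcal P$ be the set of isomorphism classes of finite nonempty posets; identify $\mathcal P$ with its (injective) image under $P\mapsto((t(Q,P))_{Q\in\mathcal P},|P|^{-1})\in[0,1]^{\mathcal P}\times[0,1]$, let $\overline{\mathcal P}$ be its closure in the product topology, and let $\mathcal P_\infty=\overline{\mathcal P}\setminus\mathcal P$ with the subspace topology (a compact metrizable space). *)

theory Defs
  imports "HOL-Analysis.Analysis"
begin

text \<open>A finite nonempty poset is represented concretely as a pair (n, R) where the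
ground set is {0..<n} (n \<ge> 1) and R is a strict partial order on it.\<close>

type_synonym fposet = "nat \<times> (nat \<times> nat) set"

definition is_fposet :: "fposet \<Rightarrow> bool" where
  "is_fposet P \<longleftrightarrow> (case P of (n, R) \<Rightarrow>
      n \<ge> 1 \<and> R \<subseteq> {0..<n} \<times> {0..<n} \<and> irrefl R \<and> trans R)"

definition poset_iso :: "fposet \<Rightarrow> fposet \<Rightarrow> bool" where
  "poset_iso P Q \<longleftrightarrow> (\<exists>f. bij_betw f {0..<fst P} {0..<fst Q} \<and>
      (\<forall>x\<in>{0..<fst P}. \<forall>y\<in>{0..<fst P}. (x, y) \<in> snd P \<longleftrightarrow> (f x, f y) \<in> snd Q))"

text \<open>Canonical representative of the isomorphism class of a poset; the set of
isomorphism classes of finite nonempty posets is identified with the set of canonical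
representatives.\<close>

definition canon :: "fposet \<Rightarrow> fposet" where
  "canon P = (SOME Q. is_fposet Q \<and> poset_iso P Q)"

definition poset_classes :: "fposet set" where
  "poset_classes = canon ` {P. is_fposet P}"

definition hom_density :: "fposet \<Rightarrow> fposet \<Rightarrow> real" where
  "hom_density Q P =
     real (card {\<phi> \<in> {0..<fst Q} \<rightarrow>\<^sub>E {0..<fst P}.
                  \<forall>x y. (x, y) \<in> snd Q \<longrightarrow> (\<phi> x, \<phi> y) \<in> snd P})
     / real (fst P) ^ (fst Q)"

definition poset_point :: "fposet \<Rightarrow> (fposet \<Rightarrow> real) \<times> real" where
  "poset_point P = ((\<lambda>Q. if Q \<in> poset_classes then hom_density Q P else undefined),
                    1 / real (fst P))"

definition ambient_top :: "((fposet \<Rightarrow> real) \<times> real) topology" where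
  "ambient_top = prod_topology
      (product_topology (\<lambda>_. top_of_set {0..1}) poset_classes) (top_of_set {0..1})"

definition posets_embedded :: "((fposet \<Rightarrow> real) \<times> real) set" where
  "posets_embedded = poset_point ` poset_classes"

definition poset_limits_proper :: "((fposet \<Rightarrow> real) \<times> real) set" where
  "poset_limits_proper = (ambient_top closure_of posets_embedded) - posets_embedded"

end

theory Submission
  imports Defs
begin


definition homs :: "nat set \<Rightarrow> nat \<Rightarrow> (nat\<times>nat) set \<Rightarrow> (nat\<times>nat) set \<Rightarrow> (nat \<Rightarrow> nat) set" where
  "homs I N R RQ = {\<phi> \<in> I \<rightarrow>\<^sub>E {0..<N}. \<forall>x y. (x, y) \<in> RQ \<longrightarrow> (\<phi> x, \<phi> y) \<in> R}"

lemma hom_density_homs: "hom_density Q P = real (card (homs {0..<fst Q} (fst P) (snd P) (snd Q))) / real (fst P) ^ fst Q"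
  unfolding hom_density_def homs_def by simp

lemma card_homs_split:
  assumes I: "finite I" and RQ: "RQ \<subseteq> I \<times> I" and R: "R \<subseteq> {0..<n} \<times> {0..<n}" and nN: "n \<le> N"
  shows "card (homs I N R RQ) = card (homs (Field RQ) n R RQ) * N ^ (card I - card (Field RQ))"
proof -
  let ?K = "Field RQ"
  have KI: "?K \<subseteq> I" using RQ unfolding Field_def by auto
  have fK: "finite ?K" using KI I finite_subset by blast
  let ?f = "\<lambda>\<phi>. (restrict \<phi> ?K, restrict \<phi> (I - ?K))"
  let ?g = "\<lambda>(ps, ch). (\<lambda>x. if x \<in> ?K then ps x else ch x)"
  have "bij_betw ?f (homs I N R RQ) (homs ?K n R RQ \<times> ((I - ?K) \<rightarrow>\<^sub>E {0..<N}))"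
  proof (rule bij_betw_byWitness[where f'="?g"])
    show "\<forall>a\<in>homs I N R RQ. ?g (?f a) = a"
    proof
      fix a assume "a \<in> homs I N R RQ"
      then have "a \<in> extensional I" unfolding homs_def by (auto simp: PiE_iff)
      then show "?g (?f a) = a" by (auto simp: fun_eq_iff extensional_def)
    qed
    show "\<forall>a\<in>homs ?K n R RQ \<times> ((I - ?K) \<rightarrow>\<^sub>E {0..<N}). ?f (?g a) = a"
    proof
      fix a assume a: "a \<in> homs ?K n R RQ \<times> ((I - ?K) \<rightarrow>\<^sub>E {0..<N})"
      obtain p c where pc: "a = (p, c)" by force
      have "p \<in> extensional ?K" "c \<in> extensional (I - ?K)" using a pc unfolding homs_def by (auto simp: PiE_iff)
      then show "?f (?g a) = a" using pc by (auto simp: fun_eq_iff extensional_def)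
    qed
    show "?f ` homs I N R RQ \<subseteq> homs ?K n R RQ \<times> ((I - ?K) \<rightarrow>\<^sub>E {0..<N})"
    proof (rule image_subsetI)
      fix \<phi> assume h: "\<phi> \<in> homs I N R RQ"
      have rel: "(\<phi> x, \<phi> y) \<in> R" if "(x,y) \<in> RQ" for x y using h that by (auto simp: homs_def)
      have "\<phi> x < n" if "x \<in> ?K" for x
      proof -
        from that obtain y where "(x,y) \<in> RQ \<or> (y,x) \<in> RQ" unfolding Field_def by blast
        then show ?thesis
        proof
          assume "(x,y) \<in> RQ" then have "(\<phi> x, \<phi> y) \<in> R" by (rule rel)
          then show ?thesis using R by auto
        next
          assume "(y,x) \<in> RQ" then have "(\<phi> y, \<phi> x) \<in> R" by (rule rel)
          then show ?thesis using R by auto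
        qed
      qed
      then have "restrict \<phi> ?K \<in> homs ?K n R RQ" "restrict \<phi> (I - ?K) \<in> (I - ?K) \<rightarrow>\<^sub>E {0..<N}"
        using h rel unfolding homs_def by (auto simp: PiE_iff FieldI1 FieldI2)
      then show "?f \<phi> \<in> homs ?K n R RQ \<times> ((I - ?K) \<rightarrow>\<^sub>E {0..<N})" by simp
    qed
    show "?g ` (homs ?K n R RQ \<times> ((I - ?K) \<rightarrow>\<^sub>E {0..<N})) \<subseteq> homs I N R RQ"
    proof (rule image_subsetI, clarify)
      fix ps ch assume a: "ps \<in> homs ?K n R RQ" "ch \<in> (I - ?K) \<rightarrow>\<^sub>E {0..<N}"
      let ?h = "(\<lambda>x. if x \<in> ?K then ps x else ch x)"
      have ps1: "ps \<in> ?K \<rightarrow>\<^sub>E {0..<n}" and ps2: "\<And>x y. (x, y) \<in> RQ \<Longrightarrow> (ps x, ps y) \<in> R"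
        using a(1) unfolding homs_def by auto
      have "?h \<in> I \<rightarrow>\<^sub>E {0..<N}"
      proof (rule PiE_I)
        fix x assume "x \<in> I"
        then show "?h x \<in> {0..<N}" using ps1 a(2) nN by (cases "x \<in> ?K") (auto simp: PiE_iff)
      next
        fix x assume "x \<notin> I"
        then show "?h x = undefined" using KI a(2) by (auto simp: PiE_iff extensional_def)
      qed
      moreover have "(?h x, ?h y) \<in> R" if "(x, y) \<in> RQ" for x y
        using that ps2[OF that] by (simp add: FieldI1 FieldI2)
      ultimately show "?h \<in> homs I N R RQ" unfolding homs_def by simp
    qed
  qed
  then have "card (homs I N R RQ) = card (homs ?K n R RQ) * card ((I - ?K) \<rightarrow>\<^sub>E {0..<N})"
    by (simp add: bij_betw_same_card card_cartesian_product)
  also have "card ((I - ?K) \<rightarrow>\<^sub>E {0..<N}) = N ^ (card I - card ?K)"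
    using I KI fK by (simp add: card_PiE card_Diff_subset)
  finally show ?thesis .
qed

lemma finite_homs: "finite I \<Longrightarrow> finite (homs I N R RQ)"
  unfolding homs_def by (rule finite_subset[OF _ finite_PiE[of I "\<lambda>_. {0..<N}"]]) auto

lemma poset_iso_refl: "poset_iso P P"
  unfolding poset_iso_def by (rule exI[of _ id]) auto

lemma canon_props: assumes "is_fposet P" shows "is_fposet (canon P) \<and> poset_iso P (canon P)"
  unfolding canon_def by (rule someI[of _ P]) (use assms poset_iso_refl in auto)

lemma poset_iso_sym: assumes "poset_iso P P'" shows "poset_iso P' P"
proof -
  obtain f where f: "bij_betw f {0..<fst P} {0..<fst P'}"
    and r: "\<forall>x\<in>{0..<fst P}. \<forall>y\<in>{0..<fst P}. (x, y) \<in> snd P \<longleftrightarrow> (f x, f y) \<in> snd P'"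
    using assms unfolding poset_iso_def by blast
  let ?g = "inv_into {0..<fst P} f"
  have g: "bij_betw ?g {0..<fst P'} {0..<fst P}" by (rule bij_betw_inv_into[OF f])
  have fg: "f (?g x) = x" if "x \<in> {0..<fst P'}" for x
    using f that by (meson bij_betw_inv_into_right)
  have "\<forall>x\<in>{0..<fst P'}. \<forall>y\<in>{0..<fst P'}. (x, y) \<in> snd P' \<longleftrightarrow> (?g x, ?g y) \<in> snd P"
  proof (intro ballI)
    fix x y assume xy: "x \<in> {0..<fst P'}" "y \<in> {0..<fst P'}"
    have "?g x \<in> {0..<fst P}" "?g y \<in> {0..<fst P}" using g xy bij_betwE by blast+
    then show "(x, y) \<in> snd P' \<longleftrightarrow> (?g x, ?g y) \<in> snd P" using r fg xy by metis
  qed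
  then show ?thesis using g unfolding poset_iso_def by blast
qed

lemma poset_iso_card_le: assumes "poset_iso P P'" and RQI: "RQ \<subseteq> I \<times> I" and fI: "finite I"
  shows "fst P = fst P' \<and> card (homs I (fst P) (snd P) RQ) \<le> card (homs I (fst P') (snd P') RQ)"
proof -
  obtain f where f: "bij_betw f {0..<fst P} {0..<fst P'}"
    and r: "\<forall>x\<in>{0..<fst P}. \<forall>y\<in>{0..<fst P}. (x, y) \<in> snd P \<longleftrightarrow> (f x, f y) \<in> snd P'"
    using assms unfolding poset_iso_def by blast
  have eq: "fst P = fst P'" using bij_betw_same_card[OF f] by simp
  let ?F = "\<lambda>\<phi>. restrict (f \<circ> \<phi>) I"
  have "inj_on ?F (homs I (fst P) (snd P) RQ)"
  proof (rule inj_onI)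
    fix a b assume a: "a \<in> homs I (fst P) (snd P) RQ" and b: "b \<in> homs I (fst P) (snd P) RQ"
      and e: "?F a = ?F b"
    show "a = b"
    proof
      fix x show "a x = b x"
      proof (cases "x \<in> I")
        case True
        then have "f (a x) = f (b x)" using e by (metis comp_apply restrict_apply')
        moreover have "a x \<in> {0..<fst P}" "b x \<in> {0..<fst P}" using a b True unfolding homs_def by auto
        ultimately show ?thesis using f by (meson bij_betw_def inj_onD)
      next
        case False
        then show ?thesis using a b unfolding homs_def by (auto simp: PiE_iff extensional_def)
      qed
    qed
  qed
  moreover have "?F ` homs I (fst P) (snd P) RQ \<subseteq> homs I (fst P') (snd P') RQ"
  proof (rule image_subsetI)
    fix a assume a: "a \<in> homs I (fst P) (snd P) RQ"
    have ain: "a x \<in> {0..<fst P}" if "x \<in> I" for x using a that unfolding homs_def by auto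
    have "?F a \<in> I \<rightarrow>\<^sub>E {0..<fst P'}" using ain f by (auto simp: bij_betw_def)
    moreover have "(?F a x, ?F a y) \<in> snd P'" if "(x, y) \<in> RQ" for x y
    proof -
      have "(a x, a y) \<in> snd P" using a that unfolding homs_def by auto
      moreover have "x \<in> I" "y \<in> I" using that RQI by auto
      ultimately show ?thesis using r ain by auto
    qed
    ultimately show "?F a \<in> homs I (fst P') (snd P') RQ" unfolding homs_def by blast
  qed
  moreover have "finite (homs I (fst P') (snd P') RQ)" by (rule finite_homs[OF fI])
  ultimately show ?thesis using eq card_inj_on_le by blast
qed


lemma fposet_Q: "is_fposet Q \<Longrightarrow> snd Q \<subseteq> {0..<fst Q} \<times> {0..<fst Q}"
  unfolding is_fposet_def by (auto split: prod.splits)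

lemma hom_density_iso: assumes "is_fposet Q" "poset_iso P P'"
  shows "fst P = fst P' \<and> hom_density Q P = hom_density Q P'"
proof -
  have RQI: "snd Q \<subseteq> {0..<fst Q} \<times> {0..<fst Q}" by (rule fposet_Q[OF assms(1)])
  have 1: "fst P = fst P'" "card (homs {0..<fst Q} (fst P) (snd P) (snd Q)) \<le> card (homs {0..<fst Q} (fst P') (snd P') (snd Q))"
    using poset_iso_card_le[OF assms(2) RQI] by auto
  have 2: "card (homs {0..<fst Q} (fst P') (snd P') (snd Q)) \<le> card (homs {0..<fst Q} (fst P) (snd P) (snd Q))"
    using poset_iso_card_le[OF poset_iso_sym[OF assms(2)] RQI] by auto
  from 1 2 have "card (homs {0..<fst Q} (fst P) (snd P) (snd Q)) = card (homs {0..<fst Q} (fst P') (snd P') (snd Q))"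
    by linarith
  with 1 show ?thesis unfolding hom_density_homs by simp
qed

lemma poset_point_canon: assumes "is_fposet P" shows "poset_point (canon P) = poset_point P"
proof -
  have iso1: "poset_iso P (canon P)" using canon_props[OF assms] by blast
  have iso2: "\<And>Q. Q \<in> poset_classes \<Longrightarrow> is_fposet Q"
    unfolding poset_classes_def using canon_props by auto
  have f1: "is_fposet (1, {})" unfolding is_fposet_def by (auto simp: irrefl_def trans_def)
  have "fst P = fst (canon P)" using hom_density_iso[OF f1 iso1] by blast
  moreover have "\<And>Q. Q \<in> poset_classes \<Longrightarrow> hom_density Q (canon P) = hom_density Q P"
    using hom_density_iso[OF iso2 iso1] by auto
  ultimately have "fst P = fst (canon P)" "\<And>Q. Q \<in> poset_classes \<Longrightarrow> hom_density Q (canon P) = hom_density Q P"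
    by auto
  then show ?thesis unfolding poset_point_def by auto
qed

definition kq :: "fposet \<Rightarrow> nat" where "kq Q = card (Field (snd Q))"

lemma hom_density_ext:
  assumes Q: "is_fposet Q" and R: "R \<subseteq> {0..<n} \<times> {0..<n}" and n: "1 \<le> n" "n \<le> N"
  shows "hom_density Q (N, R) = real (card (homs (Field (snd Q)) n R (snd Q))) / real N ^ kq Q"
proof -
  have RQI: "snd Q \<subseteq> {0..<fst Q} \<times> {0..<fst Q}" by (rule fposet_Q[OF Q])
  have c: "card (homs {0..<fst Q} N R (snd Q)) = card (homs (Field (snd Q)) n R (snd Q)) * N ^ (fst Q - kq Q)"
    using card_homs_split[OF _ RQI R n(2)] unfolding kq_def by simp
  have "Field (snd Q) \<subseteq> {0..<fst Q}" using RQI unfolding Field_def by auto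
  then have kle: "kq Q \<le> fst Q" unfolding kq_def using card_mono[of "{0..<fst Q}"] by fastforce
  have Npos: "real N > 0" using n by simp
  have "real N ^ fst Q = real N ^ (fst Q - kq Q) * real N ^ kq Q"
    using kle by (metis le_add_diff_inverse2 power_add)
  then show ?thesis unfolding hom_density_homs using c Npos by (simp add: field_simps)
qed



lemma classes_fposet: "Q \<in> poset_classes \<Longrightarrow> is_fposet Q"
  unfolding poset_classes_def using canon_props by auto

lemma topspace_ambient: "topspace ambient_top = (PiE poset_classes (\<lambda>_. {0..1::real})) \<times> {0..1::real}"
  unfolding ambient_top_def by simp

definition Gf :: "real \<Rightarrow> (fposet \<Rightarrow> real) \<times> real \<Rightarrow> (fposet \<Rightarrow> real) \<times> real" where
  "Gf s y = ((\<lambda>Q. if Q \<in> poset_classes then (1 - s) ^ kq Q * fst y Q else undefined), (1 - s) * snd y)"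

lemma unit_mult: "(a::real) \<in> {0..1} \<Longrightarrow> b \<in> {0..1} \<Longrightarrow> a * b \<in> {0..1}"
  by (auto simp: mult_le_one)

lemma Gf_top: assumes "s \<in> {0..1}" "y \<in> topspace ambient_top" shows "Gf s y \<in> topspace ambient_top"
proof -
  have s: "1 - s \<in> {0..1}" using assms by auto
  then have p: "(1 - s) ^ k \<in> {0..1}" for k by (auto simp: power_le_one)
  obtain t z where y: "y = (t, z)" by force
  have t: "t \<in> PiE poset_classes (\<lambda>_. {0..1::real})" "z \<in> {0..1}" using assms(2) y topspace_ambient by auto
  have "(\<lambda>Q. if Q \<in> poset_classes then (1 - s) ^ kq Q * t Q else undefined) \<in> PiE poset_classes (\<lambda>_. {0..1::real})"
    using t(1) p unit_mult by (auto simp: PiE_iff extensional_def)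
  moreover have "(1 - s) * z \<in> {0..1}" using s t(2) unit_mult by blast
  ultimately show ?thesis unfolding topspace_ambient Gf_def y fst_conv snd_conv by blast
qed

lemma Gf_cont: "continuous_map (prod_topology (top_of_set {0..1}) ambient_top) ambient_top (\<lambda>p. Gf (fst p) (snd p))"
proof -
  let ?Z = "prod_topology (top_of_set {0..1::real}) ambient_top"
  have c1: "continuous_map ?Z euclideanreal fst"
    by (rule continuous_map_into_fulltopology[OF continuous_map_fst])
  have c2: "continuous_map ?Z euclideanreal (\<lambda>p. snd (snd p))"
  proof -
    have "continuous_map ?Z ambient_top snd" by (rule continuous_map_snd)
    moreover have "continuous_map ambient_top euclideanreal snd"
      unfolding ambient_top_def by (rule continuous_map_into_fulltopology[OF continuous_map_snd])
    ultimately show ?thesis using continuous_map_compose by (fastforce simp: o_def)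
  qed
  have c3: "continuous_map ?Z euclideanreal (\<lambda>p. fst (snd p) Q)" if "Q \<in> poset_classes" for Q
  proof -
    have "continuous_map ?Z ambient_top snd" by (rule continuous_map_snd)
    moreover have "continuous_map ambient_top euclideanreal (\<lambda>y. fst y Q)"
    proof -
      have "continuous_map ambient_top (product_topology (\<lambda>_. top_of_set {0..1::real}) poset_classes) fst"
        unfolding ambient_top_def by (rule continuous_map_fst)
      moreover have "continuous_map (product_topology (\<lambda>_. top_of_set {0..1::real}) poset_classes) euclideanreal (\<lambda>x. x Q)"
        by (rule continuous_map_into_fulltopology[OF continuous_map_product_projection[OF that]])
      ultimately show ?thesis using continuous_map_compose by (fastforce simp: o_def)
    qed
    ultimately show ?thesis using continuous_map_compose by (fastforce simp: o_def)
  qed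
  have top: "(\<lambda>p. Gf (fst p) (snd p)) ` topspace ?Z \<subseteq> topspace ambient_top"
    using Gf_top by auto
  have ext: "(\<lambda>p. fst (Gf (fst p) (snd p))) ` topspace ?Z \<subseteq> extensional poset_classes"
    by (auto simp: Gf_def extensional_def)
  have comp: "continuous_map ?Z (top_of_set {0..1}) (\<lambda>p. fst (Gf (fst p) (snd p)) k)" if k: "k \<in> poset_classes" for k
  proof -
    have "continuous_map ?Z euclideanreal (\<lambda>p. (1 - fst p) ^ kq k * fst (snd p) k)"
      by (intro continuous_map_real_mult continuous_map_real_pow continuous_map_diff c1 c3[OF k] continuous_map_canonical_const)
    moreover have "(\<lambda>p. (1 - fst p) ^ kq k * fst (snd p) k) ` topspace ?Z \<subseteq> {0..1}"
    proof (rule image_subsetI)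
      fix p assume "p \<in> topspace ?Z"
      then have "Gf (fst p) (snd p) \<in> topspace ambient_top" using top by blast
      then have "fst (Gf (fst p) (snd p)) \<in> PiE poset_classes (\<lambda>_. {0..1::real})"
        unfolding topspace_ambient by (simp add: mem_Times_iff)
      then have "fst (Gf (fst p) (snd p)) k \<in> {0..1}" using k by blast
      then show "(1 - fst p) ^ kq k * fst (snd p) k \<in> {0..1}" using k by (simp add: Gf_def)
    qed
    ultimately show ?thesis
      using k by (simp add: continuous_map_in_subtopology Gf_def o_def image_subset_iff_funcset)
  qed
  have cfst: "continuous_map ?Z (product_topology (\<lambda>_. top_of_set {0..1}) poset_classes) (\<lambda>p. fst (Gf (fst p) (snd p)))"
    using ext comp by (simp add: continuous_map_componentwise)
  have csnd: "continuous_map ?Z (top_of_set {0..1}) (\<lambda>p. snd (Gf (fst p) (snd p)))"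
  proof -
    have "continuous_map ?Z euclideanreal (\<lambda>p. (1 - fst p) * snd (snd p))"
      by (intro continuous_map_real_mult continuous_map_diff c1 c2 continuous_map_canonical_const)
    moreover have "(\<lambda>p. (1 - fst p) * snd (snd p)) ` topspace ?Z \<subseteq> {0..1}"
    proof (rule image_subsetI)
      fix p assume "p \<in> topspace ?Z"
      then have "Gf (fst p) (snd p) \<in> topspace ambient_top" using top by blast
      then have "snd (Gf (fst p) (snd p)) \<in> {0..1::real}"
        unfolding topspace_ambient by (simp add: mem_Times_iff)
      then show "(1 - fst p) * snd (snd p) \<in> {0..1}" by (simp add: Gf_def)
    qed
    ultimately show ?thesis
      by (simp add: continuous_map_in_subtopology Gf_def o_def image_subset_iff_funcset)
  qed
  show ?thesis unfolding ambient_top_def continuous_map_pairwise o_def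
    using cfst csnd unfolding ambient_top_def by simp
qed



lemma card_homs_le: "finite I \<Longrightarrow> card (homs I N R RQ) \<le> N ^ card I"
proof -
  assume I: "finite I"
  have "homs I N R RQ \<subseteq> I \<rightarrow>\<^sub>E {0..<N}" unfolding homs_def by auto
  moreover have "finite (I \<rightarrow>\<^sub>E {0..<N})" using I by (simp add: finite_PiE)
  ultimately have "card (homs I N R RQ) \<le> card (I \<rightarrow>\<^sub>E {0..<N})"
    by (simp add: card_mono)
  also have "\<dots> = N ^ card I" using I by (simp add: card_PiE)
  finally show ?thesis .
qed

lemma fposet_fst: "is_fposet P \<Longrightarrow> fst P \<ge> 1"
  unfolding is_fposet_def by (auto split: prod.splits)

lemma fposet_snd: "is_fposet P \<Longrightarrow> snd P \<subseteq> {0..<fst P} \<times> {0..<fst P}"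
  unfolding is_fposet_def by (auto split: prod.splits)

lemma hom_density_range: assumes "is_fposet P" shows "hom_density Q P \<in> {0..1}"
proof -
  have n: "real (fst P) \<ge> 1" using fposet_fst[OF assms] by simp
  have "card (homs {0..<fst Q} (fst P) (snd P) (snd Q)) \<le> fst P ^ fst Q"
    using card_homs_le[of "{0..<fst Q}"] by simp
  then have "real (card (homs {0..<fst Q} (fst P) (snd P) (snd Q))) \<le> real (fst P) ^ fst Q"
    by (metis of_nat_le_iff of_nat_power)
  moreover have "real (fst P) ^ fst Q > 0" using n by simp
  ultimately show ?thesis unfolding hom_density_homs by (simp add: divide_le_eq_1)
qed

lemma point_top: assumes "is_fposet P" shows "poset_point P \<in> topspace ambient_top"
proof -
  have n: "real (fst P) \<ge> 1" using fposet_fst[OF assms] by simp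
  have "(\<lambda>Q. if Q \<in> poset_classes then hom_density Q P else undefined) \<in> PiE poset_classes (\<lambda>_. {0..1::real})"
    using hom_density_range[OF assms] by (auto simp: PiE_iff extensional_def)
  moreover have "1 / real (fst P) \<in> {0..1}" using n by auto
  ultimately show ?thesis unfolding topspace_ambient poset_point_def by simp
qed

lemma E_top: "posets_embedded \<subseteq> topspace ambient_top"
  unfolding posets_embedded_def using point_top classes_fposet by auto

lemma E_snd: "y \<in> posets_embedded \<Longrightarrow> snd y > 0"
proof -
  assume "y \<in> posets_embedded"
  then obtain P where "P \<in> poset_classes" "y = poset_point P" unfolding posets_embedded_def by blast
  moreover have "real (fst P) \<ge> 1" using fposet_fst[OF classes_fposet[OF calculation(1)]] by simp
  ultimately show ?thesis unfolding poset_point_def by simp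
qed

lemma fposet_ext: assumes "is_fposet (n, R)" "n \<le> N" shows "is_fposet (N, R)"
  using assms unfolding is_fposet_def by auto

lemma Gf_point:
  assumes P: "is_fposet (n, R)" and nN: "n \<le> N"
  shows "Gf (1 - real n / real N) (poset_point (n, R)) = poset_point (N, R)"
proof -
  have n1: "1 \<le> n" using fposet_fst[OF P] by simp
  have R: "R \<subseteq> {0..<n} \<times> {0..<n}" using fposet_snd[OF P] by simp
  have Npos: "real N > 0" "real n > 0" using n1 nN by auto
  have "(real n / real N) ^ kq Q * hom_density Q (n, R) = hom_density Q (N, R)" if "Q \<in> poset_classes" for Q
  proof -
    have Q: "is_fposet Q" using classes_fposet[OF that] .
    show ?thesis using hom_density_ext[OF Q R n1 order.refl] hom_density_ext[OF Q R n1 nN] Npos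
      by (simp add: power_divide)
  qed
  then show ?thesis unfolding Gf_def poset_point_def using Npos by (auto simp: fun_eq_iff)
qed

lemma E_ext: assumes "is_fposet (n, R)" "n \<le> N" shows "poset_point (N, R) \<in> posets_embedded"
proof -
  have f: "is_fposet (N, R)" by (rule fposet_ext[OF assms])
  have "canon (N, R) \<in> poset_classes" unfolding poset_classes_def using f by blast
  then show ?thesis unfolding posets_embedded_def using poset_point_canon[OF f] by (metis image_eqI)
qed



lemma choose_N:
  fixes n :: nat and c \<delta> :: real
  assumes n: "n \<ge> 1" and nd: "1 / real n < \<delta>" and c: "c \<in> {0..1}"
  shows "\<exists>N\<ge>n. \<bar>real n / real N - c\<bar> < \<delta>"
proof (cases "c < \<delta>")
  case True
  have d: "\<delta> > 0" using nd n by (smt (verit) divide_nonneg_nonneg of_nat_0_le_iff)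
  define M where "M = Suc (nat \<lceil>1 / \<delta>\<rceil>)"
  have M: "real M > 1 / \<delta>" unfolding M_def by linarith
  then have M0: "real M > 0" using d by (smt (verit) divide_pos_pos)
  have "1 / real M < \<delta>" using M d M0 by (simp add: field_simps)
  moreover have "real n / real (n * M) = 1 / real M" using n M0 by simp
  moreover have "n * M \<ge> n" using M0 by simp
  moreover have "1 / real M > 0" using M0 by simp
  moreover have "0 \<le> c" using c by simp
  ultimately have "\<bar>1 / real M - c\<bar> < \<delta>" using True
    unfolding abs_less_iff by linarith
  then have "\<bar>real n / real (n * M) - c\<bar> < \<delta>" using \<open>real n / real (n * M) = 1 / real M\<close> by simp
  then show ?thesis using \<open>n * M \<ge> n\<close> by blast
next
  case False
  then have cd: "c \<ge> \<delta>" by simp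
  have d: "\<delta> > 0" using nd n by (smt (verit) divide_nonneg_nonneg of_nat_0_le_iff)
  have c0: "c > 0" using cd d by simp
  define N where "N = nat \<lceil>real n / c\<rceil>"
  have nr: "real n \<ge> 1" using n by simp
  have "real n / c \<ge> real n" using c c0 nr by (simp add: field_simps mult_left_le)
  then have N1: "real N \<ge> real n / c" "real N < real n / c + 1" unfolding N_def by linarith+
  have Nn: "N \<ge> n" using N1 \<open>real n / c \<ge> real n\<close> by linarith
  have Npos: "real N > 0" using Nn n by simp
  have up: "real n / real N \<le> c" using N1(1) c0 Npos by (simp add: field_simps)
  have "c * real N - c < real n" using N1(2) c0 by (simp add: field_simps)
  then have "(c * real N - c) / real N < real n / real N" using Npos by (rule divide_strict_right_mono)
  moreover have "(c * real N - c) / real N = c - c / real N" using Npos by (simp add: diff_divide_distrib)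
  ultimately have "real n / real N > c - c / real N" by simp
  moreover have "c / real N \<le> 1 / real n"
  proof -
    have "c * real n \<le> 1 * real n" using c nr by (intro mult_right_mono) auto
    then have "c * real n \<le> real N" using Nn by linarith
    then show ?thesis using c c0 Npos nr by (simp add: field_simps)
  qed
  ultimately have "c - real n / real N < \<delta>" using nd by linarith
  then show ?thesis using up Nn by (intro exI[of _ N]) auto
qed


abbreviation "cl \<equiv> ambient_top closure_of posets_embedded"

lemma cont_snd_amb: "continuous_map ambient_top euclideanreal snd"
  unfolding ambient_top_def by (rule continuous_map_into_fulltopology[OF continuous_map_snd])

lemma cont_coord_amb: assumes "Q \<in> poset_classes" shows "continuous_map ambient_top euclideanreal (\<lambda>y. fst y Q)"
proof -
  have "continuous_map ambient_top (product_topology (\<lambda>_. top_of_set {0..1::real}) poset_classes) fst"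
    unfolding ambient_top_def by (rule continuous_map_fst)
  moreover have "continuous_map (product_topology (\<lambda>_. top_of_set {0..1::real}) poset_classes) euclideanreal (\<lambda>x. x Q)"
    by (rule continuous_map_into_fulltopology[OF continuous_map_product_projection[OF assms]])
  ultimately show ?thesis using continuous_map_compose by (fastforce simp: o_def)
qed

lemma class_pair: "P \<in> poset_classes \<Longrightarrow> is_fposet (fst P, snd P)"
  using classes_fposet by simp

lemma approx:
  assumes x: "x \<in> cl" and z: "snd x = 0" and s: "s \<in> {0..1}"
  shows "Gf s x \<in> cl"
  unfolding in_closure_of
proof (intro conjI allI impI)
  let ?Z = "prod_topology (top_of_set {0..1::real}) ambient_top"
  have xt: "x \<in> topspace ambient_top" using x closure_of_subset_topspace[of ambient_top posets_embedded] by blast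
  show "Gf s x \<in> topspace ambient_top" by (rule Gf_top[OF s xt])
  fix T assume T: "Gf s x \<in> T \<and> openin ambient_top T"
  define Pre where "Pre = {p \<in> topspace ?Z. Gf (fst p) (snd p) \<in> T}"
  have "openin ?Z Pre"
    unfolding Pre_def using openin_continuous_map_preimage[OF Gf_cont] T by blast
  then have alt: "\<forall>a b. (a, b) \<in> Pre \<longrightarrow> (\<exists>U V. openin (top_of_set {0..1}) U \<and> openin ambient_top V \<and> a \<in> U \<and> b \<in> V \<and> U \<times> V \<subseteq> Pre)"
    by (simp only: openin_prod_topology_alt)
  have "(s, x) \<in> Pre" unfolding Pre_def using s xt T by simp
  then have "\<exists>U V. openin (top_of_set {0..1}) U \<and> openin ambient_top V \<and> s \<in> U \<and> x \<in> V \<and> U \<times> V \<subseteq> Pre"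
    by (rule alt[rule_format])
  then obtain U V where UV: "openin (top_of_set {0..1}) U" "openin ambient_top V" "s \<in> U" "x \<in> V"
      "U \<times> V \<subseteq> Pre"
    by auto
  obtain \<delta> where d: "\<delta> > 0" "\<And>s'. s' \<in> {0..1} \<Longrightarrow> dist s' s < \<delta> \<Longrightarrow> s' \<in> U"
    using UV(1,3) unfolding openin_euclidean_subtopology_iff by blast
  let ?V = "V \<inter> {y \<in> topspace ambient_top. snd y \<in> {..<\<delta>}}"
  have oV: "openin ambient_top ?V"
    using UV(2) openin_continuous_map_preimage[OF cont_snd_amb, of "{..<\<delta>}"] by (intro openin_Int) simp_all
  have xV: "x \<in> ?V" using UV(4) xt z d by simp
  have "x \<in> topspace ambient_top \<and> (\<forall>T. x \<in> T \<and> openin ambient_top T \<longrightarrow> (\<exists>y. y \<in> posets_embedded \<and> y \<in> T))"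
    by (rule in_closure_of[THEN iffD1, OF x])
  then have all: "\<forall>T. x \<in> T \<and> openin ambient_top T \<longrightarrow> (\<exists>y. y \<in> posets_embedded \<and> y \<in> T)" by (rule conjunct2)
  have "\<exists>y. y \<in> posets_embedded \<and> y \<in> ?V" by (rule all[rule_format, OF conjI[OF xV oV]])
  then obtain y where y: "y \<in> posets_embedded" "y \<in> ?V" by (elim exE conjE)
  then obtain P where P: "P \<in> poset_classes" "y = poset_point P" unfolding posets_embedded_def by blast
  define n where "n = fst P"
  define R where "R = snd P"
  have fP: "is_fposet (n, R)" using class_pair[OF P(1)] unfolding n_def R_def .
  have n1: "n \<ge> 1" using fposet_fst[OF fP] by simp
  have yPn: "y = poset_point (n, R)" using P(2) unfolding n_def R_def by simp
  have nd: "1 / real n < \<delta>" using y(2) yPn unfolding poset_point_def by simp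
  have s1: "1 - s \<in> {0..1}" using s by simp
  obtain N where N: "N \<ge> n" "\<bar>real n / real N - (1 - s)\<bar> < \<delta>" using choose_N[OF n1 nd s1] by (elim exE conjE)
  define s' where "s' = 1 - real n / real N"
  have Npos: "real N > 0" using N(1) n1 by simp
  have "real n / real N \<le> 1" using N(1) Npos by simp
  then have s'01: "s' \<in> {0..1}" unfolding s'_def using Npos by simp
  have "dist s' s < \<delta>" using N(2) unfolding s'_def dist_real_def by simp
  then have "s' \<in> U" by (rule d(2)[OF s'01])
  then have "(s', y) \<in> U \<times> V" using y(2) by simp
  then have "(s', y) \<in> Pre" using UV(5) by (rule rev_subsetD)
  then have "Gf s' y \<in> T" unfolding Pre_def by simp
  moreover have "Gf s' y = poset_point (N, R)" unfolding s'_def yPn by (rule Gf_point[OF fP N(1)])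
  moreover have "poset_point (N, R) \<in> posets_embedded" by (rule E_ext[OF fP N(1)])
  ultimately have "poset_point (N, R) \<in> posets_embedded \<and> poset_point (N, R) \<in> T" by simp
  then show "\<exists>y. y \<in> posets_embedded \<and> y \<in> T" by (rule exI)
qed



lemma haus: "Hausdorff_space ambient_top"
proof -
  have h: "Hausdorff_space (top_of_set {0..1::real})"
    by (rule Hausdorff_space_subtopology[OF Hausdorff_space_euclidean])
  have "Hausdorff_space (product_topology (\<lambda>_. top_of_set {0..1::real}) poset_classes)"
    using h by (simp add: Hausdorff_space_product_topology)
  then show ?thesis unfolding ambient_top_def using h by (simp add: Hausdorff_space_prod_topology)
qed

lemma finite_closed: "finite F \<Longrightarrow> F \<subseteq> topspace ambient_top \<Longrightarrow> closedin ambient_top F"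
  using haus Hausdorff_imp_t1_space t1_space_closedin_finite by blast

lemma snd_zero: assumes x: "x \<in> cl" and xE: "x \<notin> posets_embedded" shows "snd x = 0"
proof (rule ccontr)
  assume nz: "snd x \<noteq> 0"
  have xt: "x \<in> topspace ambient_top" using x closure_of_subset_topspace[of ambient_top posets_embedded] by blast
  have "snd x \<in> {0..1}" using xt unfolding topspace_ambient by (simp add: mem_Times_iff)
  then have zpos: "snd x > 0" using nz by simp
  define z where "z = snd x"
  have zp: "z > 0" using zpos unfolding z_def .
  define U where "U = {y \<in> topspace ambient_top. snd y \<in> {z/2<..}}"
  have oU: "openin ambient_top U" unfolding U_def by (rule openin_continuous_map_preimage[OF cont_snd_amb]) simp
  have xU: "x \<in> U" unfolding U_def z_def using xt zpos by simp
  have xF: "x \<in> ambient_top closure_of (U \<inter> posets_embedded)"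
    using openin_Int_closure_of_subset[OF oU, of posets_embedded] xU x by blast
  define B where "B = Suc (nat \<lceil>2 / z\<rceil>)"
  have Bgt: "real B > 2 / z" unfolding B_def by linarith
  have sub: "U \<inter> posets_embedded \<subseteq> poset_point ` ({0..<B} \<times> Pow ({0..<B} \<times> {0..<B}))"
  proof
    fix y assume y: "y \<in> U \<inter> posets_embedded"
    then obtain P where P: "P \<in> poset_classes" "y = poset_point P" unfolding posets_embedded_def by blast
    have fP: "is_fposet P" by (rule classes_fposet[OF P(1)])
    have n1: "real (fst P) \<ge> 1" using fposet_fst[OF fP] by simp
    have "snd y > z / 2" using y unfolding U_def by simp
    then have "1 / real (fst P) > z / 2" using P(2) unfolding poset_point_def by simp
    then have "real (fst P) < 2 / z" using zp n1 by (simp add: field_simps)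
    then have fB: "fst P < B" using Bgt by linarith
    have "snd P \<subseteq> {0..<B} \<times> {0..<B}" using fposet_snd[OF fP] fB by auto
    then have "P \<in> {0..<B} \<times> Pow ({0..<B} \<times> {0..<B})" using fB by (simp add: mem_Times_iff)
    then show "y \<in> poset_point ` ({0..<B} \<times> Pow ({0..<B} \<times> {0..<B}))" using P(2) by (rule rev_image_eqI) 
  qed
  have fin: "finite (U \<inter> posets_embedded)"
    by (rule finite_subset[OF sub]) simp
  have "closedin ambient_top (U \<inter> posets_embedded)"
    by (rule finite_closed[OF fin]) (use E_top in blast)
  then have "ambient_top closure_of (U \<inter> posets_embedded) = U \<inter> posets_embedded"
    by (rule closure_of_closedin)
  then show False using xF xE by blast
qed


lemma hd_empty: assumes P: "is_fposet P" and Q: "is_fposet Q" and e: "snd Q = {}" shows "hom_density Q P = 1"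
proof -
  have fP: "is_fposet (fst P, snd P)" using P by simp
  have "hom_density Q (fst P, snd P) = real (card (homs (Field (snd Q)) (fst P) (snd P) (snd Q))) / real (fst P) ^ kq Q"
    by (rule hom_density_ext[OF Q fposet_snd[OF P] fposet_fst[OF P] order.refl])
  moreover have "kq Q = 0" unfolding kq_def e by simp
  moreover have "homs (Field (snd Q)) (fst P) (snd P) (snd Q) = {\<lambda>_. undefined}"
    unfolding e homs_def by simp
  ultimately show ?thesis by simp
qed

lemma hd_anti: assumes e: "snd Q \<noteq> {}" shows "hom_density Q (n, {}) = 0"
proof -
  have "homs {0..<fst Q} n {} (snd Q) = {}" using e unfolding homs_def by auto
  then show ?thesis unfolding hom_density_homs by simp
qed

lemma anti_one: assumes x: "x \<in> cl" and Q: "Q \<in> poset_classes" and e: "snd Q = {}" shows "fst x Q = 1"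
proof -
  define S where "S = {y \<in> topspace ambient_top. fst y Q \<in> {1}}"
  have cS: "closedin ambient_top S" unfolding S_def
    by (rule closedin_continuous_map_preimage[OF cont_coord_amb[OF Q]]) simp
  have "posets_embedded \<subseteq> S"
  proof
    fix y assume y: "y \<in> posets_embedded"
    then obtain P where P: "P \<in> poset_classes" "y = poset_point P" unfolding posets_embedded_def by blast
    have "fst y Q = hom_density Q P" using P Q unfolding poset_point_def by simp
    also have "\<dots> = 1" by (rule hd_empty[OF classes_fposet[OF P(1)] classes_fposet[OF Q] e])
    finally show "y \<in> S" unfolding S_def using y E_top by blast
  qed
  then have "cl \<subseteq> S" using cS by (rule closure_of_minimal)
  then show ?thesis using x unfolding S_def by blast
qed

definition aP :: "(fposet \<Rightarrow> real) \<times> real" where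
  "aP = ((\<lambda>Q. if Q \<in> poset_classes then (if snd Q = {} then 1 else 0) else undefined), 0)"

lemma Gf_one: assumes x: "x \<in> cl" and z: "snd x = 0" shows "Gf 1 x = aP"
proof -
  have "fst (Gf 1 x) Q = fst aP Q" for Q
  proof (cases "Q \<in> poset_classes")
    case True
    show ?thesis
    proof (cases "snd Q = {}")
      case e: True
      have "kq Q = 0" unfolding kq_def e by simp
      then show ?thesis using anti_one[OF x True e] True e unfolding Gf_def aP_def by simp
    next
      case ne: False
      have Qf: "is_fposet Q" by (rule classes_fposet[OF True])
      have "Field (snd Q) \<subseteq> {0..<fst Q}" using fposet_snd[OF Qf] unfolding Field_def by auto
      then have "finite (Field (snd Q))" by (rule finite_subset) simp
      moreover have "Field (snd Q) \<noteq> {}" using ne unfolding Field_def by auto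
      ultimately have "kq Q > 0" unfolding kq_def by (simp add: card_gt_0_iff)
      then show ?thesis using True ne unfolding Gf_def aP_def by simp
    qed
  next
    case False
    then show ?thesis unfolding Gf_def aP_def by simp
  qed
  moreover have "snd (Gf 1 x) = snd aP" unfolding Gf_def aP_def by simp
  ultimately show ?thesis by (simp add: prod_eq_iff fun_eq_iff)
qed

lemma Gf_zero: assumes x: "x \<in> topspace ambient_top" shows "Gf 0 x = x"
proof -
  have "fst x \<in> extensional poset_classes" using x unfolding topspace_ambient by (auto simp: PiE_iff)
  then have "fst (Gf 0 x) = fst x" unfolding Gf_def by (auto simp: fun_eq_iff extensional_def)
  moreover have "snd (Gf 0 x) = snd x" unfolding Gf_def by simp
  ultimately show ?thesis by (simp add: prod_eq_iff)
qed


lemma aP_top: "aP \<in> topspace ambient_top"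
  unfolding aP_def topspace_ambient by (auto simp: PiE_iff extensional_def)

lemma fst_aP_top: "fst aP \<in> topspace (product_topology (\<lambda>_. top_of_set {0..1::real}) poset_classes)"
  using aP_top unfolding topspace_ambient by (simp add: mem_Times_iff)

lemma aP_point: "n \<ge> 1 \<Longrightarrow> poset_point (n, {}) = (fst aP, 1 / real n)"
proof -
  assume n: "n \<ge> 1"
  have "fst (poset_point (n, {})) Q = fst aP Q" for Q
  proof (cases "Q \<in> poset_classes")
    case True
    show ?thesis
    proof (cases "snd Q = {}")
      case e: True
      have f: "is_fposet (n, {})" using n unfolding is_fposet_def by (simp add: irrefl_def trans_def)
      show ?thesis using hd_empty[OF f classes_fposet[OF True] e] True e unfolding poset_point_def aP_def by simp
    next
      case False
      then show ?thesis using hd_anti[OF False] True unfolding poset_point_def aP_def by simp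
    qed
  next
    case False
    then show ?thesis unfolding poset_point_def aP_def by simp
  qed
  then show ?thesis unfolding poset_point_def by (simp add: fun_eq_iff)
qed

lemma aP_cl: "aP \<in> cl"
  unfolding in_closure_of
proof (intro conjI allI impI)
  show "aP \<in> topspace ambient_top" by (rule aP_top)
  fix T assume T: "aP \<in> T \<and> openin ambient_top T"
  define j where "j = (\<lambda>z::real. (fst aP, z))"
  have cj: "continuous_map (top_of_set {0..1}) ambient_top j"
    unfolding ambient_top_def continuous_map_pairwise j_def o_def
    using fst_aP_top by simp
  have "openin (top_of_set {0..1}) {z \<in> topspace (top_of_set {0..1}). j z \<in> T}"
    using openin_continuous_map_preimage[OF cj] T by blast
  then have oW: "openin (top_of_set {0..1}) {z \<in> {0..1::real}. j z \<in> T}" by simp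
  have "0 \<in> {z \<in> {0..1::real}. j z \<in> T}" using T unfolding j_def by (simp add: aP_def)
  then obtain \<delta> where d: "\<delta> > 0" "\<And>z. z \<in> {0..1} \<Longrightarrow> dist z 0 < \<delta> \<Longrightarrow> z \<in> {z \<in> {0..1::real}. j z \<in> T}"
    using oW unfolding openin_euclidean_subtopology_iff by blast
  define n where "n = Suc (nat \<lceil>1 / \<delta>\<rceil>)"
  have n1: "n \<ge> 1" unfolding n_def by simp
  have "real n > 1 / \<delta>" unfolding n_def by linarith
  then have nd: "1 / real n < \<delta>" using d(1) n1 by (simp add: field_simps)
  have "1 / real n \<in> {0..1}" using n1 by simp
  moreover have "dist (1 / real n) 0 < \<delta>" using nd by simp
  ultimately have "j (1 / real n) \<in> T" using d(2) by blast
  then have inT: "poset_point (n, {}) \<in> T" unfolding j_def aP_point[OF n1] .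
  have f1: "is_fposet (1, {})" unfolding is_fposet_def by (simp add: irrefl_def trans_def)
  have "poset_point (n, {}) \<in> posets_embedded" by (rule E_ext[OF f1 n1])
  with inT have "poset_point (n, {}) \<in> posets_embedded \<and> poset_point (n, {}) \<in> T" by simp
  then show "\<exists>y. y \<in> posets_embedded \<and> y \<in> T" by (rule exI)
qed

lemma aP_notE: "aP \<notin> posets_embedded"
  using E_snd unfolding aP_def by fastforce


theorem theorem11p1:
  shows "poset_limits_proper \<noteq> {} \<and>
         contractible_space (subtopology ambient_top poset_limits_proper)"
proof
  have aPin: "aP \<in> poset_limits_proper" unfolding poset_limits_proper_def using aP_cl aP_notE by blast
  then show "poset_limits_proper \<noteq> {}" by blast
  let ?X = "subtopology ambient_top poset_limits_proper"
  let ?Z = "prod_topology (top_of_set {0..1::real}) ?X"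
  have tZ: "topspace ?Z = {0..1} \<times> (topspace ambient_top \<inter> poset_limits_proper)" by simp
  have c1: "continuous_map ?Z ambient_top (\<lambda>p. Gf (fst p) (snd p))"
    unfolding prod_topology_subtopology(2) by (rule continuous_map_from_subtopology[OF Gf_cont])
  have img: "(\<lambda>p. Gf (fst p) (snd p)) ` topspace ?Z \<subseteq> poset_limits_proper"
  proof (rule image_subsetI)
    fix p assume "p \<in> topspace ?Z"
    then have s: "fst p \<in> {0..1}" and xP: "snd p \<in> poset_limits_proper" using tZ by (auto simp: mem_Times_iff)
    have xcl: "snd p \<in> cl" and xE: "snd p \<notin> posets_embedded" using xP unfolding poset_limits_proper_def by auto
    have z: "snd (snd p) = 0" by (rule snd_zero[OF xcl xE])
    have i1: "Gf (fst p) (snd p) \<in> cl" by (rule approx[OF xcl z s])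
    have s0: "snd (Gf (fst p) (snd p)) = 0" using z unfolding Gf_def by simp
    have i2: "Gf (fst p) (snd p) \<notin> posets_embedded"
    proof
      assume "Gf (fst p) (snd p) \<in> posets_embedded"
      then have "snd (Gf (fst p) (snd p)) > 0" by (rule E_snd)
      then show False using s0 by simp
    qed
    from i1 i2 show "Gf (fst p) (snd p) \<in> poset_limits_proper" unfolding poset_limits_proper_def by blast
  qed
  have cG: "continuous_map ?Z ?X (\<lambda>p. Gf (fst p) (snd p))"
    using c1 img by (simp add: continuous_map_in_subtopology image_subset_iff_funcset)
  define h where "h = (\<lambda>p::real \<times> ((fposet \<Rightarrow> real) \<times> real). if fst p = 0 then snd p else if fst p = 1 then aP else Gf (fst p) (snd p))"
  have ch: "continuous_map ?Z ?X h"
  proof (rule continuous_map_eq[OF cG])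
    fix p assume "p \<in> topspace ?Z"
    then have xP: "snd p \<in> poset_limits_proper" and xt: "snd p \<in> topspace ambient_top" using tZ by (auto simp: mem_Times_iff)
    have xcl: "snd p \<in> cl" and xE: "snd p \<notin> posets_embedded" using xP unfolding poset_limits_proper_def by auto
    have z: "snd (snd p) = 0" by (rule snd_zero[OF xcl xE])
    show "Gf (fst p) (snd p) = h p"
      unfolding h_def using Gf_zero[OF xt] Gf_one[OF xcl z] by auto
  qed
  have "homotopic_with (\<lambda>x. True) ?X ?X id (\<lambda>x. aP)"
    unfolding homotopic_with_def
    by (rule exI[of _ h]) (use ch in \<open>simp add: h_def\<close>)
  then show "contractible_space ?X" unfolding contractible_space_def by blast
qed


end
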